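(* If $x_R=\infty$, then $\alpha(\bar G)\le\alpha(\overline F)+1$ and $\beta(\bar G)\ge\beta(\overline F)+1$. If $x_R<\infty$, then $\alpha(\bar G(x_R-(\cdot)^{-1}))\le\alpha(\overline F(x_R-(\cdot)^{-1}))-1$ and $\beta(\bar G(x_R-(\cdot)^{-1}))\ge\beta(\overline F(x_R-(\cdot)^{-1}))-1$.
   Context: $F$ is a c.d.f. with $F(0)=0$, finite mean $\mathbb{E}[B]$, right endpoint $x_R=\sup\{x:F(x)<1\}\le\infty$; $\overline F=1-F$; $G(x)=\int_0^x\overline F(t)dt/\mathbb{E}[B]$, $\bar G=1-G$. For a function $\phi$, $\phi(x_R-(\cdot)^{-1})$ denotes $x\mapsto\phi(x_R-1/x)$. For positive $f$, the upper Matuszewska index $\alpha(f)$ is the infimum of those $\alpha$ for which there is $C$ such that for each $\Lambda>1$, $f(\mu x)/f(x)\le C(1+o(1))\mu^\alpha$ as $x\to\infty$ uniformly in $\mu\in[1,\Lambda]$; the lower index $\beta(f)$ is the supremum of those $\beta$ for which there is $D>0$ with $f(\mu x)/f(x)\ge D(1+o(1))\mu^\beta$ uniformly in $\mu\in[1,\Lambda]$. *)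

theory Defs
  imports "HOL-Analysis.Analysis"
begin

definition right_endpoint :: "(real \<Rightarrow> real) \<Rightarrow> ereal" where
  "right_endpoint F = Sup (ereal ` {x. F x < 1})"

text \<open>Mean E[B] of a nonnegative random variable with c.d.f. F: integral of the tail.\<close>
definition cdf_mean :: "(real \<Rightarrow> real) \<Rightarrow> real" where
  "cdf_mean F = integral {0..} (\<lambda>t. 1 - F t)"

definition integrated_tail :: "(real \<Rightarrow> real) \<Rightarrow> real \<Rightarrow> real" where
  "integrated_tail F x = integral {0..x} (\<lambda>t. 1 - F t) / cdf_mean F"

definition integrated_tail_bar :: "(real \<Rightarrow> real) \<Rightarrow> real \<Rightarrow> real" where
  "integrated_tail_bar F x = 1 - integrated_tail F x"

text \<open>Upper Matuszewska index; C(1+o(1)) with constant C is written as C + o(1).\<close>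
definition upper_matuszewska :: "(real \<Rightarrow> real) \<Rightarrow> ereal" where
  "upper_matuszewska f = Inf {ereal a | a. \<exists>C. \<forall>\<Lambda>>1. \<forall>\<epsilon>>0.
      eventually (\<lambda>x. \<forall>\<mu>\<in>{1..\<Lambda>}. f (\<mu> * x) / f x \<le> (C + \<epsilon>) * \<mu> powr a) at_top}"

definition lower_matuszewska :: "(real \<Rightarrow> real) \<Rightarrow> ereal" where
  "lower_matuszewska f = Sup {ereal b | b. \<exists>D>0. \<forall>\<Lambda>>1. \<forall>\<epsilon>>0.
      eventually (\<lambda>x. \<forall>\<mu>\<in>{1..\<Lambda>}. f (\<mu> * x) / f x \<ge> (D - \<epsilon>) * \<mu> powr b) at_top}"

end

theory Submission
  imports Defs
begin


lemma affine_tail: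
  fixes h :: "real \<Rightarrow> real" and m c y :: real
  assumes m: "m > 0" and hint: "h integrable_on {m*y+c ..}"
    and hnn: "\<And>x. x \<ge> m*y+c \<Longrightarrow> h x \<ge> 0"
  shows "(\<lambda>s. h(m * s+c)) integrable_on {y ..}"
    "integral {m*y+c ..} h = m * integral {y ..} (\<lambda>s. h(m * s+c))"
proof -
  let ?A = "{m*y+c ..}"
  have "h absolutely_integrable_on ?A"
    using hint hnn by (intro nonnegative_absolutely_integrable_1) auto
  hence I: "integrable lebesgue (\<lambda>x. indicator ?A x *\<^sub>R h x)"
    by (simp add: set_integrable_def)
  have eq: "(\<lambda>x. indicator ?A (c + m * x) *\<^sub>R h(c+m * x)) = (\<lambda>x. indicator {y ..} x *\<^sub>R h(m * x+c))"
    using m by (auto simp: indicator_def algebra_simps fun_eq_iff)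
  have I2: "integrable lebesgue (\<lambda>x. indicator {y ..} x *\<^sub>R h(m * x+c))"
    using lebesgue_integrable_real_affine[OF I, of m c] m eq by simp
  hence S2: "set_integrable lebesgue {y ..} (\<lambda>x. h(m * x+c))"
    by (simp add: set_integrable_def)
  show "(\<lambda>s. h(m * s+c)) integrable_on {y ..}"
    using set_lebesgue_integral_eq_integral(1)[OF S2] .
  have S1: "set_integrable lebesgue ?A h" using I by (simp add: set_integrable_def)
  have "integral ?A h = (LINT x:?A | lebesgue. h x)"
    using set_lebesgue_integral_eq_integral(2)[OF S1] by simp
  also have "\<dots> = (\<integral>x. indicator ?A x *\<^sub>R h x \<partial>lebesgue)"
    by (simp add: set_lebesgue_integral_def)
  also have "\<dots> = \<bar>m\<bar> *\<^sub>R (\<integral>x. indicator ?A (c + m * x) *\<^sub>R h(c+m * x) \<partial>lebesgue)"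
    using m by (intro lebesgue_integral_real_affine) simp
  also have "\<dots> = m * (LINT x:{y ..} | lebesgue. h(m * x+c))"
    using m eq by (simp add: set_lebesgue_integral_def)
  also have "\<dots> = m * integral {y ..} (\<lambda>s. h(m * s+c))"
    using set_lebesgue_integral_eq_integral(2)[OF S2] by simp
  finally show "integral {m*y+c ..} h = m * integral {y ..} (\<lambda>s. h(m * s+c))" .
qed



lemma index_transfer:
  fixes f g :: "real \<Rightarrow> real" and k :: real
  assumes fpos: "eventually (\<lambda>x. f x > 0) at_top"
    and gpos: "eventually (\<lambda>x. g x > 0) at_top"
    and up: "eventually (\<lambda>x. \<forall>\<mu>\<ge>1. \<forall>K. (\<forall>t\<ge>x. f (\<mu> * t) \<le> K * f t) \<longrightarrow> g (\<mu> * x) \<le> \<mu> powr k * K * g x) at_top"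
    and lo: "eventually (\<lambda>x. \<forall>\<mu>\<ge>1. \<forall>K. (\<forall>t\<ge>x. f (\<mu> * t) \<ge> K * f t) \<longrightarrow> g (\<mu> * x) \<ge> \<mu> powr k * K * g x) at_top"
  shows "upper_matuszewska g \<le> upper_matuszewska f + ereal k"
    and "lower_matuszewska g \<ge> lower_matuszewska f + ereal k"
proof -
  let ?Sf = "{ereal a | a. \<exists>C. \<forall>\<Lambda>>1. \<forall>\<epsilon>>0.
      eventually (\<lambda>x. \<forall>\<mu>\<in>{1..\<Lambda>}. f (\<mu> * x) / f x \<le> (C + \<epsilon>) * \<mu> powr a) at_top}"
  let ?Sg = "{ereal a | a. \<exists>C. \<forall>\<Lambda>>1. \<forall>\<epsilon>>0.
      eventually (\<lambda>x. \<forall>\<mu>\<in>{1..\<Lambda>}. g (\<mu> * x) / g x \<le> (C + \<epsilon>) * \<mu> powr a) at_top}"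
  have memU: "ereal (a + k) \<in> ?Sg" if "ereal a \<in> ?Sf" for a
  proof -
    from that obtain C where HC: "\<forall>\<Lambda>>1. \<forall>\<epsilon>>0.
      eventually (\<lambda>x. \<forall>\<mu>\<in>{1..\<Lambda>}. f (\<mu> * x) / f x \<le> (C + \<epsilon>) * \<mu> powr a) at_top" by auto
    have "eventually (\<lambda>x. \<forall>\<mu>\<in>{1..\<Lambda>}. g (\<mu> * x) / g x \<le> (C + \<epsilon>) * \<mu> powr (a + k)) at_top"
      if L: "\<Lambda> > 1" and e: "\<epsilon> > 0" for \<Lambda> \<epsilon>
    proof -
      have E1: "eventually (\<lambda>x. \<forall>y\<ge>x. \<forall>\<mu>\<in>{1..\<Lambda>}. f (\<mu> * y) / f y \<le> (C + \<epsilon>) * \<mu> powr a) at_top"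
        using HC L e by (intro eventually_all_ge_at_top) auto
      have E2: "eventually (\<lambda>x. \<forall>y\<ge>x. f y > 0) at_top"
        using fpos by (intro eventually_all_ge_at_top)
      show ?thesis
        using E1 E2 gpos up
      proof eventually_elim
        case (elim x)
        show ?case
        proof
          fix \<mu> assume mu: "\<mu> \<in> {1..\<Lambda>}"
          let ?K = "(C + \<epsilon>) * \<mu> powr a"
          have "\<forall>t\<ge>x. f (\<mu> * t) \<le> ?K * f t"
          proof (intro allI impI)
            fix t assume "t \<ge> x"
            hence "f (\<mu> * t) / f t \<le> ?K" "f t > 0" using elim mu by auto
            thus "f (\<mu> * t) \<le> ?K * f t" by (simp add: divide_le_eq)
          qed
          hence "g (\<mu> * x) \<le> \<mu> powr k * ?K * g x" using elim mu by auto
          hence "g (\<mu> * x) / g x \<le> \<mu> powr k * ?K" using elim by (simp add: divide_le_eq)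
          also have "\<mu> powr k * ?K = (C + \<epsilon>) * \<mu> powr (a + k)"
            using mu by (simp add: powr_add)
          finally show "g (\<mu> * x) / g x \<le> (C + \<epsilon>) * \<mu> powr (a + k)" .
        qed
      qed
    qed
    thus ?thesis by blast
  qed
  show "upper_matuszewska g \<le> upper_matuszewska f + ereal k"
  proof -
    have "Inf ?Sg - ereal k \<le> z" if "z \<in> ?Sf" for z
    proof -
      from that obtain a where z: "z = ereal a" by auto
      have "Inf ?Sg \<le> ereal (a + k)" using memU that z by (intro Inf_lower) auto
      thus ?thesis using z by (cases "Inf ?Sg") auto
    qed
    hence "Inf ?Sg - ereal k \<le> Inf ?Sf" by (intro Inf_greatest) auto
    hence "Inf ?Sg \<le> Inf ?Sf + ereal k"
      by (cases "Inf ?Sg"; cases "Inf ?Sf") auto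
    thus ?thesis unfolding upper_matuszewska_def .
  qed
  let ?Tf = "{ereal b | b. \<exists>D>0. \<forall>\<Lambda>>1. \<forall>\<epsilon>>0.
      eventually (\<lambda>x. \<forall>\<mu>\<in>{1..\<Lambda>}. f (\<mu> * x) / f x \<ge> (D - \<epsilon>) * \<mu> powr b) at_top}"
  let ?Tg = "{ereal b | b. \<exists>D>0. \<forall>\<Lambda>>1. \<forall>\<epsilon>>0.
      eventually (\<lambda>x. \<forall>\<mu>\<in>{1..\<Lambda>}. g (\<mu> * x) / g x \<ge> (D - \<epsilon>) * \<mu> powr b) at_top}"
  have memL: "ereal (b + k) \<in> ?Tg" if "ereal b \<in> ?Tf" for b
  proof -
    from that obtain D where D0: "D > 0" and HC: "\<forall>\<Lambda>>1. \<forall>\<epsilon>>0.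
      eventually (\<lambda>x. \<forall>\<mu>\<in>{1..\<Lambda>}. f (\<mu> * x) / f x \<ge> (D - \<epsilon>) * \<mu> powr b) at_top" by auto
    have "eventually (\<lambda>x. \<forall>\<mu>\<in>{1..\<Lambda>}. g (\<mu> * x) / g x \<ge> (D - \<epsilon>) * \<mu> powr (b + k)) at_top"
      if L: "\<Lambda> > 1" and e: "\<epsilon> > 0" for \<Lambda> \<epsilon>
    proof -
      have E1: "eventually (\<lambda>x. \<forall>y\<ge>x. \<forall>\<mu>\<in>{1..\<Lambda>}. f (\<mu> * y) / f y \<ge> (D - \<epsilon>) * \<mu> powr b) at_top"
        using HC L e by (intro eventually_all_ge_at_top) auto
      have E2: "eventually (\<lambda>x. \<forall>y\<ge>x. f y > 0) at_top"
        using fpos by (intro eventually_all_ge_at_top)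
      show ?thesis
        using E1 E2 gpos lo
      proof eventually_elim
        case (elim x)
        show ?case
        proof
          fix \<mu> assume mu: "\<mu> \<in> {1..\<Lambda>}"
          let ?K = "(D - \<epsilon>) * \<mu> powr b"
          have "\<forall>t\<ge>x. f (\<mu> * t) \<ge> ?K * f t"
          proof (intro allI impI)
            fix t assume "t \<ge> x"
            hence "f (\<mu> * t) / f t \<ge> ?K" "f t > 0" using elim mu by auto
            thus "f (\<mu> * t) \<ge> ?K * f t" by (simp add: le_divide_eq)
          qed
          hence "g (\<mu> * x) \<ge> \<mu> powr k * ?K * g x" using elim mu by auto
          hence "g (\<mu> * x) / g x \<ge> \<mu> powr k * ?K" using elim by (simp add: le_divide_eq)
          moreover have "\<mu> powr k * ?K = (D - \<epsilon>) * \<mu> powr (b + k)"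
            using mu by (simp add: powr_add)
          ultimately show "g (\<mu> * x) / g x \<ge> (D - \<epsilon>) * \<mu> powr (b + k)" by simp
        qed
      qed
    qed
    thus ?thesis using D0 by blast
  qed
  show "lower_matuszewska g \<ge> lower_matuszewska f + ereal k"
  proof -
    have "z \<le> Sup ?Tg - ereal k" if "z \<in> ?Tf" for z
    proof -
      from that obtain b where z: "z = ereal b" by auto
      have "ereal (b + k) \<le> Sup ?Tg" using memL that z by (intro Sup_upper) auto
      thus ?thesis using z by (cases "Sup ?Tg") auto
    qed
    hence "Sup ?Tf \<le> Sup ?Tg - ereal k" by (intro Sup_least) auto
    hence "Sup ?Tf + ereal k \<le> Sup ?Tg"
      by (cases "Sup ?Tg"; cases "Sup ?Tf") auto
    thus ?thesis unfolding lower_matuszewska_def .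
  qed
qed



theorem lemma7:
  fixes F :: "real \<Rightarrow> real"
  assumes mono: "mono F"
    and rcont: "\<And>x. continuous (at_right x) F"
    and lim_bot: "(F \<longlongrightarrow> 0) at_bot"
    and lim_top: "(F \<longlongrightarrow> 1) at_top"
    and F0: "F 0 = 0"
    and finite_mean: "(\<lambda>t. 1 - F t) integrable_on {0..}"
  shows "(right_endpoint F = \<infinity> \<longrightarrow>
            upper_matuszewska (integrated_tail_bar F)
              \<le> upper_matuszewska (\<lambda>x. 1 - F x) + 1
          \<and> lower_matuszewska (integrated_tail_bar F)
              \<ge> lower_matuszewska (\<lambda>x. 1 - F x) + 1)
       \<and> (\<forall>r::real. right_endpoint F = ereal r \<longrightarrow>
            upper_matuszewska (\<lambda>x. integrated_tail_bar F (r - 1 / x))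
              \<le> upper_matuszewska (\<lambda>x. 1 - F (r - 1 / x)) - 1
          \<and> lower_matuszewska (\<lambda>x. integrated_tail_bar F (r - 1 / x))
              \<ge> lower_matuszewska (\<lambda>x. 1 - F (r - 1 / x)) - 1)"
proof -
  define h where "h = (\<lambda>t. 1 - F t)"
  define E where "E = cdf_mean F"
  have E_def': "E = integral {0..} h" unfolding E_def cdf_mean_def h_def ..
  have Fle1: "F x \<le> 1" for x
  proof (rule tendsto_lowerbound[OF lim_top])
    show "eventually (\<lambda>y. F x \<le> F y) at_top"
      using eventually_ge_at_top[of x] by eventually_elim (use mono in \<open>auto simp: mono_def\<close>)
  qed simp
  have hnn: "h x \<ge> 0" for x using Fle1[of x] by (simp add: h_def)
  have hanti: "h s \<ge> h z" if "s \<le> z" for s z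
    using mono that by (simp add: h_def mono_def)
  have habs: "set_integrable lebesgue {0..} h"
    using finite_mean hnn unfolding h_def
    by (metis (no_types, lifting) absolutely_integrable_on_def h_def nonnegative_absolutely_integrable_1)
  have hint: "h integrable_on A" if "A \<subseteq> {0..}" "A \<in> sets lebesgue" for A
    using set_lebesgue_integral_eq_integral(1)[OF set_integrable_subset[OF habs that(2) that(1)]] .
  have hint_ge: "h integrable_on {y..}" if "y \<ge> 0" for y
    using that by (intro hint) auto
  have hKint: "(\<lambda>s. K * h s) integrable_on {y..}" if "y \<ge> 0" for y K
    using integrable_on_cmult_left[OF hint_ge[OF that]] by simp
  have hint_cc: "h integrable_on {y..z}" if "y \<ge> 0" for y z
    using that by (intro hint) auto
  have hpos_int: "integral {y..} h > 0" if "0 \<le> y" "y < z" "h z > 0" for y z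
  proof -
    have "integral {y..z} (\<lambda>_. h z) \<le> integral {y..z} h"
      using that hanti by (intro integral_le hint_cc) auto
    moreover have "integral {y..z} (\<lambda>_. h z) = h z * (z - y)" using that by simp
    moreover have "integral {y..z} h \<le> integral {y..} h"
      using that hnn by (intro integral_subset_le hint_cc hint_ge) auto
    moreover have "h z * (z - y) > 0" using that by simp
    ultimately show ?thesis by linarith
  qed
  obtain \<delta> where d0: "\<delta> > 0" and Fd: "F \<delta> < 1"
  proof -
    have "(F \<longlongrightarrow> F 0) (at_right 0)" using rcont[of 0] by (simp add: continuous_within)
    hence "eventually (\<lambda>x. F x < 1) (at_right 0)" using F0 by (intro order_tendstoD(2)) auto
    then obtain b where "b > 0" "\<forall>y>0. y < b \<longrightarrow> F y < 1"
      by (auto simp: eventually_at_right_field)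
    thus ?thesis using that[of "b/2"] by auto
  qed
  have Epos: "E > 0" unfolding E_def' using d0 Fd by (intro hpos_int[of 0 \<delta>]) (auto simp: h_def)
  have tail: "integrated_tail_bar F y = integral {y..} h / E" if "y \<ge> 0" for y
  proof -
    have "(h has_integral (integral {0..y} h + integral {y..} h)) ({0..y} \<union> {y..})"
      using that by (intro has_integral_Un integrable_integral hint_cc hint_ge) auto
    moreover have "{0..y} \<union> {y..} = {0..}" using that by auto
    ultimately have "E = integral {0..y} h + integral {y..} h"
      unfolding E_def' by (metis integral_unique)
    thus ?thesis using Epos
      unfolding integrated_tail_bar_def integrated_tail_def E_def[symmetric] h_def[symmetric]
      by (simp add: field_simps)
  qed
  have part1: "right_endpoint F = \<infinity> \<longrightarrow>
            upper_matuszewska (integrated_tail_bar F)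
              \<le> upper_matuszewska (\<lambda>x. 1 - F x) + 1
          \<and> lower_matuszewska (integrated_tail_bar F)
              \<ge> lower_matuszewska (\<lambda>x. 1 - F x) + 1"
  proof
    assume RE: "right_endpoint F = \<infinity>"
    have Flt: "F y < 1" for y
    proof (rule ccontr)
      assume "\<not> F y < 1"
      hence "F z \<ge> 1" if "z \<ge> y" for z using mono that by (meson le_less_trans linorder_not_le monoD)
      hence "\<forall>w\<in>ereal ` {x. F x < 1}. w \<le> ereal y"
        by (smt (verit, best) ereal_less_eq(3) image_iff mem_Collect_eq)
      hence "right_endpoint F \<le> ereal y" unfolding right_endpoint_def by (intro Sup_least) auto
      thus False using RE by simp
    qed
    have hp: "h y > 0" for y using Flt[of y] by (simp add: h_def)
    have up: "eventually (\<lambda>x. \<forall>\<mu>\<ge>1. \<forall>K. (\<forall>t\<ge>x. h (\<mu> * t) \<le> K * h t) \<longrightarrow>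
        integrated_tail_bar F (\<mu> * x) \<le> \<mu> powr 1 * K * integrated_tail_bar F x) at_top"
      using eventually_ge_at_top[of 0]
    proof eventually_elim
      case (elim x)
      show ?case
      proof (intro allI impI)
        fix \<mu> K assume mu: "\<mu> \<ge> 1" and H: "\<forall>t\<ge>x. h (\<mu> * t) \<le> K * h t"
        have i1: "h integrable_on {\<mu> * x + 0..}" using elim mu by (intro hint_ge) auto
        have aff: "(\<lambda>s. h (\<mu> * s + 0)) integrable_on {x..}"
            "integral {\<mu> * x + 0..} h = \<mu> * integral {x..} (\<lambda>s. h (\<mu> * s + 0))"
          using affine_tail[OF _ i1] mu hnn by auto
        have "integral {x..} (\<lambda>s. h (\<mu> * s + 0)) \<le> integral {x..} (\<lambda>s. K * h s)"
          using aff H elim by (intro integral_le hKint) auto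
        also have "\<dots> = K * integral {x..} h" by simp
        finally have "integral {\<mu> * x..} h \<le> \<mu> * (K * integral {x..} h)"
          using aff mu by simp
        hence "integral {\<mu> * x..} h / E \<le> \<mu> * K * (integral {x..} h / E)"
          using Epos by (simp add: divide_right_mono)
        thus "integrated_tail_bar F (\<mu> * x) \<le> \<mu> powr 1 * K * integrated_tail_bar F x"
          using tail elim mu by simp
      qed
    qed
    have lo: "eventually (\<lambda>x. \<forall>\<mu>\<ge>1. \<forall>K. (\<forall>t\<ge>x. h (\<mu> * t) \<ge> K * h t) \<longrightarrow>
        integrated_tail_bar F (\<mu> * x) \<ge> \<mu> powr 1 * K * integrated_tail_bar F x) at_top"
      using eventually_ge_at_top[of 0]
    proof eventually_elim
      case (elim x)
      show ?case
      proof (intro allI impI)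
        fix \<mu> K assume mu: "\<mu> \<ge> 1" and H: "\<forall>t\<ge>x. h (\<mu> * t) \<ge> K * h t"
        have i1: "h integrable_on {\<mu> * x + 0..}" using elim mu by (intro hint_ge) auto
        have aff: "(\<lambda>s. h (\<mu> * s + 0)) integrable_on {x..}"
            "integral {\<mu> * x + 0..} h = \<mu> * integral {x..} (\<lambda>s. h (\<mu> * s + 0))"
          using affine_tail[OF _ i1] mu hnn by auto
        have "integral {x..} (\<lambda>s. h (\<mu> * s + 0)) \<ge> integral {x..} (\<lambda>s. K * h s)"
          using aff H elim by (intro integral_le hKint) auto
        moreover have "integral {x..} (\<lambda>s. K * h s) = K * integral {x..} h" by simp
        ultimately have "integral {\<mu> * x..} h \<ge> \<mu> * (K * integral {x..} h)"
          using aff mu by simp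
        hence "integral {\<mu> * x..} h / E \<ge> \<mu> * K * (integral {x..} h / E)"
          using Epos by (simp add: divide_right_mono)
        thus "integrated_tail_bar F (\<mu> * x) \<ge> \<mu> powr 1 * K * integrated_tail_bar F x"
          using tail elim mu by simp
      qed
    qed
    have gpos: "eventually (\<lambda>x. integrated_tail_bar F x > 0) at_top"
      using eventually_ge_at_top[of 0]
    proof eventually_elim
      case (elim x)
      have "integral {x..} h > 0" using elim hp by (intro hpos_int[of x "x+1"]) auto
      thus ?case using tail[OF elim] Epos by simp
    qed
    have T: "upper_matuszewska (integrated_tail_bar F) \<le> upper_matuszewska h + ereal 1"
      "lower_matuszewska (integrated_tail_bar F) \<ge> lower_matuszewska h + ereal 1"
      using index_transfer[of h "integrated_tail_bar F" 1] hp gpos up lo by auto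
    thus "upper_matuszewska (integrated_tail_bar F)
              \<le> upper_matuszewska (\<lambda>x. 1 - F x) + 1
          \<and> lower_matuszewska (integrated_tail_bar F)
              \<ge> lower_matuszewska (\<lambda>x. 1 - F x) + 1"
      by (simp add: h_def one_ereal_def)
  qed
  have part2: "right_endpoint F = ereal r \<longrightarrow>
            upper_matuszewska (\<lambda>x. integrated_tail_bar F (r - 1 / x))
              \<le> upper_matuszewska (\<lambda>x. 1 - F (r - 1 / x)) - 1
          \<and> lower_matuszewska (\<lambda>x. integrated_tail_bar F (r - 1 / x))
              \<ge> lower_matuszewska (\<lambda>x. 1 - F (r - 1 / x)) - 1" for r
  proof
    assume RE: "right_endpoint F = ereal r"
    have Flt: "F y < 1" if "y < r" for y
    proof -
      have "ereal y < Sup (ereal ` {x. F x < 1})" using RE that by (simp add: right_endpoint_def)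
      then obtain z where "F z < 1" "y < z" by (auto simp: less_Sup_iff)
      thus ?thesis using mono by (meson le_less_trans less_imp_le monoD)
    qed
    have Fgt: "F y = 1" if "y > r" for y
    proof (rule ccontr)
      assume "F y \<noteq> 1"
      hence "F y < 1" using Fle1[of y] by simp
      hence "ereal y \<le> right_endpoint F" unfolding right_endpoint_def by (intro Sup_upper) auto
      thus False using RE that by simp
    qed
    have Fr: "F r = 1"
    proof -
      have L1: "(F \<longlongrightarrow> F r) (at_right r)" using rcont[of r] by (simp add: continuous_within)
      have "eventually (\<lambda>x. F x = 1) (at_right r)"
        unfolding eventually_at_right_field using Fgt by (intro exI[of _ "r+1"]) auto
      hence "(F \<longlongrightarrow> 1) (at_right r)" by (rule tendsto_eventually)
      thus ?thesis using L1 tendsto_unique trivial_limit_at_right_real by blast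
    qed
    have hz: "h y = 0" if "y \<ge> r" for y
      using that Fgt Fr by (cases "y = r") (auto simp: h_def)
    have hp: "h y > 0" if "y < r" for y using Flt[OF that] by (simp add: h_def)
    have rpos: "r > 0"
    proof -
      have "ereal \<delta> \<le> right_endpoint F" unfolding right_endpoint_def using Fd by (intro Sup_upper) auto
      thus ?thesis using RE d0 by simp
    qed
    let ?f = "\<lambda>x. h (r - 1 / x)"
    let ?g = "\<lambda>x. integrated_tail_bar F (r - 1 / x)"
    have EV: "eventually (\<lambda>x::real. x > 1 / r) at_top" by (rule eventually_gt_at_top)
    have xfacts: "x > 0" "r - 1 / x \<ge> 0" if "x > 1 / r" for x
    proof -
      have "1 / r > 0" using rpos by simp
      thus x0: "x > 0" using that by linarith
      have "1 / x < r" using that rpos x0 by (simp add: divide_less_eq mult.commute pos_divide_less_eq)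
      thus "r - 1 / x \<ge> 0" by simp
    qed
    have key: "r - 1 / (\<mu> * x) = (1/\<mu>) * (r - 1/x) + (r - r/\<mu>)" if "\<mu> \<ge> 1" "x > 0" for \<mu> x
      using that by (simp add: field_simps)
    have subst: "(1/\<mu>) * s + (r - r/\<mu>) = r - 1 / (\<mu> * (1 / (r - s)))" if "s < r" "\<mu> \<ge> 1" for s \<mu>
      using that by (simp add: field_simps)
    have tge: "1 / (r - s) \<ge> x" if "s \<ge> r - 1/x" "s < r" "x > 0" for s x
    proof -
      have "r - s \<le> 1 / x" using that by simp
      hence "x \<le> 1 / (r - s)" using that by (simp add: le_divide_eq mult.commute pos_le_divide_eq)
      thus ?thesis .
    qed
    have inv: "r - 1 / (1 / (r - s)) = s" for s by simp
    have big: "(1/\<mu>) * s + (r - r/\<mu>) \<ge> r" if "s \<ge> r" "\<mu> \<ge> 1" for s \<mu>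
    proof -
      have "(1/\<mu>) * s + (r - r/\<mu>) = r + (s - r) / \<mu>" using that by (simp add: field_simps)
      moreover have "(s - r) / \<mu> \<ge> 0" using that by simp
      ultimately show ?thesis by simp
    qed
    have up: "eventually (\<lambda>x. \<forall>\<mu>\<ge>1. \<forall>K. (\<forall>t\<ge>x. ?f (\<mu> * t) \<le> K * ?f t) \<longrightarrow>
        ?g (\<mu> * x) \<le> \<mu> powr (-1) * K * ?g x) at_top"
      using EV
    proof eventually_elim
      case (elim x)
      note xf = xfacts[OF elim]
      show ?case
      proof (intro allI impI)
        fix \<mu> K assume mu: "\<mu> \<ge> 1" and H: "\<forall>t\<ge>x. ?f (\<mu> * t) \<le> K * ?f t"
        define y where "y = r - 1 / x"
        define c where "c = r - r / \<mu>"
        have ky: "(1/\<mu>) * y + c = r - 1 / (\<mu> * x)" using key[OF mu xf(1)] by (simp add: y_def c_def)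
        have y0: "y \<ge> 0" using xf y_def by simp
        have ge0: "(1/\<mu>) * y + c \<ge> 0"
        proof -
          have "1 / (\<mu> * x) \<le> 1 / x" using mu xf(1) by (intro divide_left_mono) auto
          thus ?thesis using ky y0 unfolding y_def by linarith
        qed
        have i1: "h integrable_on {(1/\<mu>) * y + c..}" using ge0 by (intro hint_ge) auto
        have aff: "(\<lambda>s. h ((1/\<mu>) * s + c)) integrable_on {y..}"
            "integral {(1/\<mu>) * y + c..} h = (1/\<mu>) * integral {y..} (\<lambda>s. h ((1/\<mu>) * s + c))"
          using affine_tail[OF _ i1] mu hnn by auto
        have pw: "h ((1/\<mu>) * s + c) \<le> K * h s" if "s \<in> {y..}" for s
        proof (cases "s < r")
          case True
          have "1 / (r - s) \<ge> x" using tge[of x s] that True xf by (simp add: y_def)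
          hence A: "?f (\<mu> * (1 / (r - s))) \<le> K * ?f (1 / (r - s))" using H by blast
          have B: "?f (1 / (r - s)) = h s" using inv[of s] by simp
          have C: "h ((1/\<mu>) * s + c) = ?f (\<mu> * (1 / (r - s)))"
            unfolding c_def using subst[OF True mu] by (simp only:)
          show ?thesis using A B C by simp
        next
          case False
          thus ?thesis using hz big[of s \<mu>] mu by (simp add: c_def)
        qed
        have "integral {y..} (\<lambda>s. h ((1/\<mu>) * s + c)) \<le> integral {y..} (\<lambda>s. K * h s)"
          using aff pw y0 by (intro integral_le hKint) auto
        also have "\<dots> = K * integral {y..} h" by simp
        finally have "integral {(1/\<mu>) * y + c..} h \<le> (1/\<mu>) * (K * integral {y..} h)"
          using aff mu by (simp add: divide_right_mono)
        hence "integral {(1/\<mu>) * y + c..} h / E \<le> ((1/\<mu>) * (K * integral {y..} h)) / E"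
          using Epos by (intro divide_right_mono) auto
        also have "\<dots> = (1/\<mu>) * K * (integral {y..} h / E)" by simp
        finally have "integral {(1/\<mu>) * y + c..} h / E \<le> (1/\<mu>) * K * (integral {y..} h / E)" .
        moreover have "\<mu> powr (-1) = 1/\<mu>" using mu by (simp add: powr_minus_divide)
        ultimately show "?g (\<mu> * x) \<le> \<mu> powr (-1) * K * ?g x"
          using tail[OF ge0] tail[OF y0] ky by (simp add: y_def)
      qed
    qed
    have lo: "eventually (\<lambda>x. \<forall>\<mu>\<ge>1. \<forall>K. (\<forall>t\<ge>x. ?f (\<mu> * t) \<ge> K * ?f t) \<longrightarrow>
        ?g (\<mu> * x) \<ge> \<mu> powr (-1) * K * ?g x) at_top"
      using EV
    proof eventually_elim
      case (elim x)
      note xf = xfacts[OF elim]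
      show ?case
      proof (intro allI impI)
        fix \<mu> K assume mu: "\<mu> \<ge> 1" and H: "\<forall>t\<ge>x. ?f (\<mu> * t) \<ge> K * ?f t"
        define y where "y = r - 1 / x"
        define c where "c = r - r / \<mu>"
        have ky: "(1/\<mu>) * y + c = r - 1 / (\<mu> * x)" using key[OF mu xf(1)] by (simp add: y_def c_def)
        have y0: "y \<ge> 0" using xf y_def by simp
        have ge0: "(1/\<mu>) * y + c \<ge> 0"
        proof -
          have "1 / (\<mu> * x) \<le> 1 / x" using mu xf(1) by (intro divide_left_mono) auto
          thus ?thesis using ky y0 unfolding y_def by linarith
        qed
        have i1: "h integrable_on {(1/\<mu>) * y + c..}" using ge0 by (intro hint_ge) auto
        have aff: "(\<lambda>s. h ((1/\<mu>) * s + c)) integrable_on {y..}"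
            "integral {(1/\<mu>) * y + c..} h = (1/\<mu>) * integral {y..} (\<lambda>s. h ((1/\<mu>) * s + c))"
          using affine_tail[OF _ i1] mu hnn by auto
        have pw: "h ((1/\<mu>) * s + c) \<ge> K * h s" if "s \<in> {y..}" for s
        proof (cases "s < r")
          case True
          have "1 / (r - s) \<ge> x" using tge[of x s] that True xf by (simp add: y_def)
          hence A: "?f (\<mu> * (1 / (r - s))) \<ge> K * ?f (1 / (r - s))" using H by blast
          have B: "?f (1 / (r - s)) = h s" using inv[of s] by simp
          have C: "h ((1/\<mu>) * s + c) = ?f (\<mu> * (1 / (r - s)))"
            unfolding c_def using subst[OF True mu] by (simp only:)
          show ?thesis using A B C by simp
        next
          case False
          thus ?thesis using hz big[of s \<mu>] mu by (simp add: c_def)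
        qed
        have "integral {y..} (\<lambda>s. h ((1/\<mu>) * s + c)) \<ge> integral {y..} (\<lambda>s. K * h s)"
          using aff pw y0 by (intro integral_le hKint) auto
        moreover have "integral {y..} (\<lambda>s. K * h s) = K * integral {y..} h" by simp
        ultimately have "integral {(1/\<mu>) * y + c..} h \<ge> (1/\<mu>) * (K * integral {y..} h)"
          using aff mu by (simp add: divide_right_mono)
        hence "((1/\<mu>) * (K * integral {y..} h)) / E \<le> integral {(1/\<mu>) * y + c..} h / E"
          using Epos by (intro divide_right_mono) auto
        moreover have "((1/\<mu>) * (K * integral {y..} h)) / E = (1/\<mu>) * K * (integral {y..} h / E)" by simp
        ultimately have "integral {(1/\<mu>) * y + c..} h / E \<ge> (1/\<mu>) * K * (integral {y..} h / E)" by simp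
        moreover have "\<mu> powr (-1) = 1/\<mu>" using mu by (simp add: powr_minus_divide)
        ultimately show "?g (\<mu> * x) \<ge> \<mu> powr (-1) * K * ?g x"
          using tail[OF ge0] tail[OF y0] ky by (simp add: y_def)
      qed
    qed
    have fpos: "eventually (\<lambda>x. ?f x > 0) at_top"
      using EV by eventually_elim (use xfacts hp in auto)
    have gpos: "eventually (\<lambda>x. ?g x > 0) at_top"
      using EV
    proof eventually_elim
      case (elim x)
      note xf = xfacts[OF elim]
      have l1: "r - 1 / x < r - 1 / (2 * x)" "r - 1 / (2 * x) < r" using xf by (simp_all add: field_simps)
      have "integral {r - 1 / x..} h > 0" by (rule hpos_int[OF xf(2) l1(1) hp[OF l1(2)]])
      thus ?case using tail[OF xf(2)] Epos by simp
    qed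
    have T: "upper_matuszewska ?g \<le> upper_matuszewska ?f + ereal (-1)"
      "lower_matuszewska ?g \<ge> lower_matuszewska ?f + ereal (-1)"
      using index_transfer[of ?f ?g "-1"] fpos gpos up lo by auto
    have m1: "z + ereal (-1) = z - 1" for z :: ereal by (cases z) (auto simp: one_ereal_def)
    show "upper_matuszewska ?g \<le> upper_matuszewska (\<lambda>x. 1 - F (r - 1 / x)) - 1
          \<and> lower_matuszewska ?g \<ge> lower_matuszewska (\<lambda>x. 1 - F (r - 1 / x)) - 1"
      using T unfolding m1 by (simp add: h_def)
  qed
  show ?thesis using part1 part2 by blast
qed

end
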